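(* Let ${\bm{x}}_1^m,\dots,{\bm{x}}_n^m\in\mathbb{R}^d$ satisfy $\|{\bm{x}}_i^m\|\le1$, let $\ell(z)=\log(1+e^{-z})$ and $F_m({\bm{w}})=\frac1n\sum_{i=1}^n\ell(\langle{\bm{w}},{\bm{x}}_i^m\rangle)$. For ${\bm{w}}_1,{\bm{w}}_2\in\mathbb{R}^d$ with $\|{\bm{w}}_1-{\bm{w}}_2\|\le1$, $$\|\nabla F_m({\bm{w}}_2)-\nabla F_m({\bm{w}}_1)\|\le7F_m({\bm{w}}_1)\|{\bm{w}}_2-{\bm{w}}_1\|.$$
   Context: $F_m$ is the logistic loss of client $m$ in a distributed logistic regression problem with labels absorbed into the data. *)

theory Defs
  imports "HOL-Analysis.Analysis"
begin

definition logistic_loss :: "real \<Rightarrow> real" where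
  "logistic_loss z = ln (1 + exp (- z))"

definition client_loss :: "nat \<Rightarrow> (nat \<Rightarrow> 'a::real_inner) \<Rightarrow> 'a \<Rightarrow> real" where
  "client_loss n x w = (1 / real n) * (\<Sum>i = 1..n. logistic_loss (inner w (x i)))"

end

theory Submission
  imports Defs
begin

lemma deriv_cl:
  fixes x :: "nat \<Rightarrow> 'a::real_inner"
  shows "GDERIV (client_loss n x) w :> (1 / real n) *\<^sub>R (\<Sum>i = 1..n. (- 1 / (1 + exp (inner w (x i)))) *\<^sub>R x i)"
proof -
  have d: "((\<lambda>w. logistic_loss (inner w (x i))) has_derivative (\<lambda>h. (- 1 / (1 + exp (inner w (x i)))) * inner h (x i))) (at w)" for i
  proof -
    have "((\<lambda>w. ln (1 + exp (- inner w (x i)))) has_derivative (\<lambda>h. (1 / (1 + exp (- inner w (x i)))) * (exp (- inner w (x i)) * (- inner h (x i))))) (at w)"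
      by (auto intro!: derivative_eq_intros simp: fun_eq_iff add_pos_pos divide_inverse mult_ac)
    moreover have "(1 / (1 + exp (- inner w (x i)))) * exp (- inner w (x i)) = 1 / (1 + exp (inner w (x i)))"
      by (simp add: exp_minus field_simps)
    ultimately show ?thesis unfolding logistic_loss_def
      by (metis (no_types, lifting) ext mult.assoc mult_minus_right minus_divide_left mult_minus_left)
  qed
  have "((\<lambda>w. (1 / real n) * (\<Sum>i = 1..n. logistic_loss (inner w (x i)))) has_derivative
     (\<lambda>h. (1 / real n) * (\<Sum>i = 1..n. (- 1 / (1 + exp (inner w (x i)))) * inner h (x i)))) (at w)"
    by (intro has_derivative_mult_right has_derivative_sum d)
  then show ?thesis unfolding gderiv_def client_loss_def[abs_def]
    by (simp add: inner_sum_right inner_commute)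
qed

lemma exp_diff_bound:
  fixes a b :: real
  assumes "\<bar>b - a\<bar> \<le> 1"
  shows "\<bar>exp b - exp a\<bar> \<le> 3 * exp b * \<bar>b - a\<bar>"
proof (cases "a \<le> b")
  case True
  have "exp a = exp b * exp (a - b)" by (simp add: exp_diff)
  also have "\<dots> \<ge> exp b * (1 + (a - b))"
    by (intro mult_left_mono exp_ge_add_one_self) auto
  finally have "exp b - exp a \<le> exp b * (b - a)" by (simp add: algebra_simps)
  moreover have "exp a \<le> exp b" using True by simp
  moreover have "0 \<le> exp b * (b - a)" using True by simp
  moreover have "3 * exp b * (b - a) = 3 * (exp b * (b - a))" by simp
  moreover have "\<bar>exp b - exp a\<bar> = exp b - exp a" using \<open>exp a \<le> exp b\<close> by simp
  moreover have "\<bar>b - a\<bar> = b - a" using True by simp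
  ultimately show ?thesis by linarith
next
  case False
  let ?t = "a - b"
  have t1: "?t \<le> 1" "?t > 0" using assms False by auto
  have "exp (- ?t) \<ge> 1 - ?t" using exp_ge_add_one_self[of "- ?t"] by (simp add: algebra_simps)
  hence "exp ?t * exp (- ?t) \<ge> exp ?t * (1 - ?t)" by (intro mult_left_mono) auto
  moreover have "exp ?t * exp (- ?t) = 1" by (simp only: exp_add[symmetric]) simp
  ultimately have e1: "exp ?t - 1 \<le> ?t * exp ?t" by (simp add: algebra_simps)
  have "exp ?t \<le> exp 1" using t1 by simp
  hence "exp ?t \<le> 3" using exp_le by linarith
  hence "?t * exp ?t \<le> ?t * 3" using t1 by (intro mult_left_mono) auto
  hence "exp ?t - 1 \<le> ?t * 3" using e1 by linarith
  hence "exp b * (exp ?t - 1) \<le> exp b * (?t * 3)" by (intro mult_left_mono) auto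
  moreover have "exp a = exp b * exp ?t" by (simp add: exp_diff)
  moreover have "exp b \<le> exp a" using False by simp
  ultimately show ?thesis using False by (simp add: algebra_simps)
qed

lemma sigma_le_loss: "1 / (1 + exp a) \<le> logistic_loss a"
proof -
  have "ln (1 / (1 + exp (- a))) \<le> 1 / (1 + exp (- a)) - 1"
    by (rule ln_le_minus_one) (simp add: add_pos_pos)
  moreover have "1 + exp (- a) \<noteq> 0" using exp_gt_zero[of "-a"] by linarith
  ultimately have "- ln (1 + exp (- a)) \<le> 1 / (1 + exp (- a)) - 1"
    by (simp add: ln_div)
  moreover have "1 / (1 + exp (- a)) - 1 = - (1 / (1 + exp a))"
  proof -
    have "1 + exp a > 0" using exp_gt_zero[of a] by linarith
    thus ?thesis by (simp add: exp_minus field_simps)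
  qed
  ultimately show ?thesis unfolding logistic_loss_def by linarith
qed

lemma scalar_bound:
  fixes a b :: real
  assumes "\<bar>b - a\<bar> \<le> 1"
  shows "\<bar>(- 1 / (1 + exp b)) - (- 1 / (1 + exp a))\<bar> \<le> 3 * logistic_loss a * \<bar>b - a\<bar>"
proof -
  have pA: "1 + exp a > 0" and pB: "1 + exp b > 0" by (auto simp: add_pos_pos)
  have eq: "(- 1 / (1 + exp b)) - (- 1 / (1 + exp a)) = (exp b - exp a) / ((1 + exp a) * (1 + exp b))"
    using pA pB by (simp add: field_simps)
  have "\<bar>exp b - exp a\<bar> \<le> 3 * \<bar>b - a\<bar> * (1 + exp b)"
  proof -
    have "3 * \<bar>b - a\<bar> * (1 + exp b) = 3 * exp b * \<bar>b - a\<bar> + 3 * \<bar>b - a\<bar>" by (simp add: algebra_simps)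
    thus ?thesis using exp_diff_bound[OF assms] by (smt (verit) abs_ge_zero)
  qed
  hence "\<bar>exp b - exp a\<bar> / ((1 + exp a) * (1 + exp b)) \<le> 3 * \<bar>b - a\<bar> * (1 + exp b) / ((1 + exp a) * (1 + exp b))"
    using pA pB by (intro divide_right_mono) auto
  also have "\<dots> = (3 * \<bar>b - a\<bar>) / (1 + exp a)"
    using pB by (intro nonzero_mult_divide_mult_cancel_right) simp
  also have "\<dots> = 3 * (1 / (1 + exp a)) * \<bar>b - a\<bar>" by simp
  also have "\<dots> \<le> 3 * logistic_loss a * \<bar>b - a\<bar>"
    by (intro mult_right_mono mult_left_mono sigma_le_loss) auto
  finally have fin: "\<bar>exp b - exp a\<bar> / ((1 + exp a) * (1 + exp b)) \<le> 3 * logistic_loss a * \<bar>b - a\<bar>" .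
  have habs: "\<bar>(- 1 / (1 + exp b)) - (- 1 / (1 + exp a))\<bar> = \<bar>exp b - exp a\<bar> / ((1 + exp a) * (1 + exp b))"
    unfolding eq abs_divide using pA pB by simp
  show ?thesis using habs fin by linarith
qed

lemma grad_eq:
  fixes f :: "'a::real_inner \<Rightarrow> real"
  assumes "GDERIV f w :> D1" "GDERIV f w :> D2"
  shows "D1 = D2"
proof -
  have "(\<lambda>h. inner h D1) = (\<lambda>h. inner h D2)"
    using assms unfolding gderiv_def by (rule has_derivative_unique)
  hence "inner (D1 - D2) D1 = inner (D1 - D2) D2" by metis
  hence "inner (D1 - D2) (D1 - D2) = 0" by (simp add: inner_diff_right)
  thus ?thesis by simp
qed

lemma loss_nonneg: "logistic_loss a \<ge> 0"
  unfolding logistic_loss_def by simp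

theorem lemmaB4:
  fixes n :: nat and x :: "nat \<Rightarrow> real ^ 'd" and w1 w2 :: "real ^ 'd"
    and gradF :: "real ^ 'd \<Rightarrow> real ^ 'd"
  assumes "n \<ge> 1"
    and "\<And>i. i \<in> {1..n} \<Longrightarrow> norm (x i) \<le> 1"
    and "\<And>w. GDERIV (client_loss n x) w :> gradF w"
    and "norm (w1 - w2) \<le> 1"
  shows "norm (gradF w2 - gradF w1) \<le> 7 * client_loss n x w1 * norm (w2 - w1)"
proof -
  define g :: "real \<Rightarrow> real" where "g z = - 1 / (1 + exp z)" for z
  have gr: "gradF w = (1 / real n) *\<^sub>R (\<Sum>i = 1..n. g (inner w (x i)) *\<^sub>R x i)" for w
    unfolding g_def using grad_eq[OF assms(3) deriv_cl] .
  have "gradF w2 - gradF w1 = (1 / real n) *\<^sub>R (\<Sum>i = 1..n. (g (inner w2 (x i)) - g (inner w1 (x i))) *\<^sub>R x i)"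
    unfolding gr by (simp add: scaleR_diff_right sum_subtractf scaleR_diff_left)
  hence "norm (gradF w2 - gradF w1) = (1 / real n) * norm (\<Sum>i = 1..n. (g (inner w2 (x i)) - g (inner w1 (x i))) *\<^sub>R x i)"
    by simp
  also have "\<dots> \<le> (1 / real n) * (\<Sum>i = 1..n. norm ((g (inner w2 (x i)) - g (inner w1 (x i))) *\<^sub>R x i))"
    by (intro mult_left_mono norm_sum) auto
  also have "\<dots> \<le> (1 / real n) * (\<Sum>i = 1..n. 3 * logistic_loss (inner w1 (x i)) * norm (w2 - w1))"
  proof (intro mult_left_mono sum_mono)
    fix i assume i: "i \<in> {1..n}"
    have nx: "norm (x i) \<le> 1" using assms(2)[OF i] .
    have "\<bar>inner w2 (x i) - inner w1 (x i)\<bar> = \<bar>inner (w2 - w1) (x i)\<bar>" by (simp add: inner_diff_left)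
    also have "\<dots> \<le> norm (w2 - w1) * norm (x i)" by (rule Cauchy_Schwarz_ineq2)
    also have "\<dots> \<le> norm (w2 - w1)" using nx by (simp add: mult_left_le)
    finally have d: "\<bar>inner w2 (x i) - inner w1 (x i)\<bar> \<le> norm (w2 - w1)" .
    have n21: "norm (w2 - w1) \<le> 1" using assms(4) by (simp add: norm_minus_commute)
    have "norm ((g (inner w2 (x i)) - g (inner w1 (x i))) *\<^sub>R x i) = \<bar>g (inner w2 (x i)) - g (inner w1 (x i))\<bar> * norm (x i)"
      by simp
    also have "\<dots> \<le> \<bar>g (inner w2 (x i)) - g (inner w1 (x i))\<bar>"
      using nx by (simp add: mult_left_le)
    also have "\<dots> \<le> 3 * logistic_loss (inner w1 (x i)) * \<bar>inner w2 (x i) - inner w1 (x i)\<bar>"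
      unfolding g_def using d n21 by (intro scalar_bound) linarith
    also have "\<dots> \<le> 3 * logistic_loss (inner w1 (x i)) * norm (w2 - w1)"
      using d loss_nonneg by (intro mult_left_mono) auto
    finally show "norm ((g (inner w2 (x i)) - g (inner w1 (x i))) *\<^sub>R x i) \<le> 3 * logistic_loss (inner w1 (x i)) * norm (w2 - w1)" .
  qed auto
  also have "\<dots> = 3 * client_loss n x w1 * norm (w2 - w1)"
    unfolding client_loss_def by (simp add: sum_distrib_left sum_distrib_right mult_ac)
  also have "\<dots> \<le> 7 * client_loss n x w1 * norm (w2 - w1)"
  proof -
    have "client_loss n x w1 \<ge> 0" unfolding client_loss_def
      by (intro mult_nonneg_nonneg sum_nonneg loss_nonneg) auto
    thus ?thesis by (intro mult_right_mono) auto
  qed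
  finally show ?thesis .
qed

end
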